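(* Let $\mathcal{H}$ be a separable Hilbert space and $H$ a positive Hermitian operator on $\mathcal{H}$ with purely discrete spectrum, such that there is no infinite-dimensional subspace on which $H$ is bounded. For $E>0$ let $\mathcal{P}(E)$ be the set of density operators $\rho$ on $\mathcal{H}$ with $\mathrm{Tr}\,\rho H\le E$. Then every sequence in $\mathcal{P}(E)$ has a subsequence that is Cauchy with respect to the Hilbert–Schmidt norm.
   Context: A density operator is a Hermitian, positive semidefinite, trace-class operator of trace 1. $\|A\|_2=\sqrt{\mathrm{Tr}\,A^\dagger A}$ is the Hilbert–Schmidt norm. For positive $\rho$, $\mathrm{Tr}\,\rho H=\sum_n\langle n|\rho|n\rangle E_n$ in an eigenbasis of $H$. *)

theory Defs
  imports "HOL-Analysis.Analysis"
begin

text \<open>Model: the separable Hilbert space is l2 over a countable index type 'i, whose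
standard basis is an eigenbasis of H.  Vectors are functions 'i => complex,
operators (bounded ones) are given by their matrices A i j = <i|A|j>.\<close>

definition l2 :: "('i \<Rightarrow> complex) set" where
  "l2 = {x. (\<lambda>i. (cmod (x i))\<^sup>2) summable_on UNIV}"

definition l2_norm :: "('i \<Rightarrow> complex) \<Rightarrow> real" where
  "l2_norm x = sqrt (\<Sum>\<^sub>\<infinity>i. (cmod (x i))\<^sup>2)"

definition H_dom :: "('i \<Rightarrow> real) \<Rightarrow> ('i \<Rightarrow> complex) set" where
  "H_dom ev = {x \<in> l2. (\<lambda>i. of_real (ev i) * x i) \<in> l2}"

definition H_app :: "('i \<Rightarrow> real) \<Rightarrow> ('i \<Rightarrow> complex) \<Rightarrow> ('i \<Rightarrow> complex)" where
  "H_app ev x = (\<lambda>i. of_real (ev i) * x i)"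

definition is_subspace :: "('i \<Rightarrow> complex) set \<Rightarrow> bool" where
  "is_subspace V \<longleftrightarrow> V \<subseteq> l2 \<and> (\<lambda>i. 0) \<in> V \<and>
     (\<forall>x\<in>V. \<forall>y\<in>V. (\<lambda>i. x i + y i) \<in> V) \<and>
     (\<forall>c::complex. \<forall>x\<in>V. (\<lambda>i. c * x i) \<in> V)"

definition finite_dimensional :: "('i \<Rightarrow> complex) set \<Rightarrow> bool" where
  "finite_dimensional V \<longleftrightarrow>
     (\<exists>B. finite B \<and> B \<subseteq> V \<and> (\<forall>x\<in>V. \<exists>c. x = (\<lambda>i. \<Sum>b\<in>B. c b * b i)))"

definition no_inf_dim_bounded_subspace :: "('i \<Rightarrow> real) \<Rightarrow> bool" where
  "no_inf_dim_bounded_subspace ev \<longleftrightarrow>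
     (\<forall>V. is_subspace V \<and> V \<subseteq> H_dom ev \<and>
          (\<exists>C. \<forall>x\<in>V. l2_norm (H_app ev x) \<le> C * l2_norm x)
          \<longrightarrow> finite_dimensional V)"

text \<open>Density operators, given by their matrices: Hermitian, positive semidefinite,
trace class (for positive operators: summable diagonal) with trace 1.\<close>

definition density_operator :: "('i \<Rightarrow> 'i \<Rightarrow> complex) \<Rightarrow> bool" where
  "density_operator \<rho> \<longleftrightarrow>
     (\<forall>i j. \<rho> j i = cnj (\<rho> i j)) \<and>
     (\<forall>x::'i \<Rightarrow> complex. finite {i. x i \<noteq> 0} \<longrightarrow>
        0 \<le> Re (\<Sum>i\<in>{i. x i \<noteq> 0}. \<Sum>j\<in>{i. x i \<noteq> 0}. cnj (x i) * \<rho> i j * x j)) \<and>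
     ((\<lambda>i. Re (\<rho> i i)) has_sum 1) UNIV"

text \<open>Tr (rho H) = sum_n <n|rho|n> E_n in the eigenbasis.\<close>

definition energy :: "('i \<Rightarrow> real) \<Rightarrow> ('i \<Rightarrow> 'i \<Rightarrow> complex) \<Rightarrow> real" where
  "energy ev \<rho> = (\<Sum>\<^sub>\<infinity>i. Re (\<rho> i i) * ev i)"

definition energy_finite :: "('i \<Rightarrow> real) \<Rightarrow> ('i \<Rightarrow> 'i \<Rightarrow> complex) \<Rightarrow> bool" where
  "energy_finite ev \<rho> \<longleftrightarrow> (\<lambda>i. Re (\<rho> i i) * ev i) summable_on UNIV"

definition P_E :: "('i \<Rightarrow> real) \<Rightarrow> real \<Rightarrow> ('i \<Rightarrow> 'i \<Rightarrow> complex) set" where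
  "P_E ev E = {\<rho>. density_operator \<rho> \<and> energy_finite ev \<rho> \<and> energy ev \<rho> \<le> E}"

definition hs_norm :: "('i \<Rightarrow> 'i \<Rightarrow> complex) \<Rightarrow> real" where
  "hs_norm A = sqrt (\<Sum>\<^sub>\<infinity>(i,j). (cmod (A i j))\<^sup>2)"

end

theory Submission
  imports Defs "HOL-Library.Function_Algebras"
begin


definition fscale :: "complex \<Rightarrow> ('i \<Rightarrow> complex) \<Rightarrow> ('i \<Rightarrow> complex)" where
  "fscale c x = (\<lambda>i. c * x i)"

lemma vs_fscale: "vector_space fscale"
  by unfold_locales (auto simp: fscale_def algebra_simps fun_eq_iff plus_fun_def)

lemma sum_fun_apply: "(sum f A) i = sum (\<lambda>a. f a i) A"
  by (induction A rule: infinite_finite_induct) (auto simp: plus_fun_def)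

definition delta :: "'i \<Rightarrow> 'i \<Rightarrow> complex" where
  "delta t = (\<lambda>i. if i = t then 1 else 0)"

lemma findim_deltas_finite:
  assumes fd: "finite_dimensional V" and dV: "\<And>t. t \<in> S \<Longrightarrow> delta t \<in> V"
  shows "finite S"
proof (rule ccontr)
  assume inf: "infinite S"
  interpret fv: vector_space fscale by (rule vs_fscale)
  obtain B where B: "finite B" "B \<subseteq> V" "\<And>x. x \<in> V \<Longrightarrow> \<exists>c. x = (\<lambda>i. \<Sum>b\<in>B. c b * b i)"
    using fd unfolding finite_dimensional_def by blast
  obtain T where T: "finite T" "card T = Suc (card B)" "T \<subseteq> S"
    using infinite_arbitrarily_large[OF inf] by blast
  have sp: "delta ` T \<subseteq> fv.span B"
  proof
    fix v assume "v \<in> delta ` T"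
    then have "v \<in> V" using T dV by auto
    then obtain c where "v = (\<lambda>i. \<Sum>b\<in>B. c b * b i)" using B by blast
    then have "v = sum (\<lambda>b. fscale (c b) b) B"
      by (simp add: fun_eq_iff sum_fun_apply fscale_def)
    also have "\<dots> \<in> fv.span B"
      by (intro fv.span_sum fv.span_scale fv.span_base)
    finally show "v \<in> fv.span B" .
  qed
  have ind: "fv.independent (delta ` T)"
    unfolding fv.independent_explicit_finite_subsets
  proof (intro allI impI ballI)
    fix S' u v assume S': "S' \<subseteq> delta ` T" "finite S'" "(\<Sum>v\<in>S'. fscale (u v) v) = 0" "v \<in> S'"
    then obtain t where t: "v = delta t" by auto
    have "0 = (\<Sum>w\<in>S'. fscale (u w) w) t" using S' by simp
    also have "\<dots> = (\<Sum>w\<in>S'. u w * w t)" by (simp add: sum_fun_apply fscale_def)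
    also have "\<dots> = u v * v t + (\<Sum>w\<in>S' - {v}. u w * w t)"
      using S' by (simp add: sum.remove)
    also have "(\<Sum>w\<in>S' - {v}. u w * w t) = 0"
    proof (rule sum.neutral, rule ballI)
      fix w assume w: "w \<in> S' - {v}"
      then obtain t' where "w = delta t'" using S' by auto
      with w t have "t' \<noteq> t" by auto
      then show "u w * w t = 0" using \<open>w = delta t'\<close> by (simp add: delta_def)
    qed
    finally show "u v = 0" using t by (simp add: delta_def)
  qed
  have "inj_on delta T" by (auto simp: inj_on_def delta_def fun_eq_iff split: if_splits)
  then have "card (delta ` T) = Suc (card B)" using T by (simp add: card_image)
  moreover have "card (delta ` T) \<le> card B"
    using fv.independent_span_bound[OF B(1) ind sp] by simp
  ultimately show False by simp
qed

lemma summable_finite_support: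
  fixes f :: "'a \<Rightarrow> real"
  assumes "finite {i. f i \<noteq> 0}"
  shows "f summable_on UNIV"
proof -
  have "f summable_on {i. f i \<noteq> 0}" using assms by simp
  then show ?thesis by (subst (asm) summable_on_cong_neutral[where T=UNIV and g=f]) auto
qed

lemma finite_low_energy:
  fixes ev :: "'i \<Rightarrow> real"
  assumes ev0: "\<And>i. 0 \<le> ev i" and nb: "no_inf_dim_bounded_subspace ev"
  shows "finite {i. ev i \<le> M}"
proof -
  define V where "V = {x::'i \<Rightarrow> complex. finite {i. x i \<noteq> 0} \<and> (\<forall>i. x i \<noteq> 0 \<longrightarrow> ev i \<le> M)}"
  have l2: "x \<in> l2" if "finite {i. x i \<noteq> 0}" for x :: "'i \<Rightarrow> complex"
    unfolding l2_def by (auto intro!: summable_finite_support finite_subset[OF _ that])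
  have sub: "is_subspace V"
    unfolding is_subspace_def V_def
  proof (intro conjI ballI allI subsetI)
    show "x \<in> l2" if "x \<in> {x. finite {i. x i \<noteq> 0} \<and> (\<forall>i. x i \<noteq> 0 \<longrightarrow> ev i \<le> M)}" for x
      using that l2 by auto
  next
    fix x y assume x: "x \<in> {x::'i\<Rightarrow>complex. finite {i. x i \<noteq> 0} \<and> (\<forall>i. x i \<noteq> 0 \<longrightarrow> ev i \<le> M)}"
      and y: "y \<in> {x::'i\<Rightarrow>complex. finite {i. x i \<noteq> 0} \<and> (\<forall>i. x i \<noteq> 0 \<longrightarrow> ev i \<le> M)}"
    have "{i. x i + y i \<noteq> 0} \<subseteq> {i. x i \<noteq> 0} \<union> {i. y i \<noteq> 0}" by auto
    then show "(\<lambda>i. x i + y i) \<in> {x. finite {i. x i \<noteq> 0} \<and> (\<forall>i. x i \<noteq> 0 \<longrightarrow> ev i \<le> M)}"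
      using x y by (auto intro: finite_subset)
  next
    fix c :: complex and x assume x: "x \<in> {x::'i\<Rightarrow>complex. finite {i. x i \<noteq> 0} \<and> (\<forall>i. x i \<noteq> 0 \<longrightarrow> ev i \<le> M)}"
    have "{i. c * x i \<noteq> 0} \<subseteq> {i. x i \<noteq> 0}" by auto
    then show "(\<lambda>i. c * x i) \<in> {x. finite {i. x i \<noteq> 0} \<and> (\<forall>i. x i \<noteq> 0 \<longrightarrow> ev i \<le> M)}"
      using x by (auto intro: finite_subset)
  qed auto
  have dom: "V \<subseteq> H_dom ev"
  proof
    fix x assume x: "x \<in> V"
    have "{i. complex_of_real (ev i) * x i \<noteq> 0} \<subseteq> {i. x i \<noteq> 0}" by auto
    then show "x \<in> H_dom ev" using x l2 unfolding H_dom_def V_def by (auto intro: finite_subset)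
  qed
  have bd: "l2_norm (H_app ev x) \<le> \<bar>M\<bar> * l2_norm x" if x: "x \<in> V" for x
  proof -
    have fin: "finite {i. x i \<noteq> 0}" using x by (simp add: V_def)
    have s1: "(\<lambda>i. (cmod (H_app ev x i))\<^sup>2) summable_on UNIV"
      by (rule summable_finite_support, rule finite_subset[OF _ fin]) (auto simp: H_app_def)
    have s2: "(\<lambda>i. M\<^sup>2 * (cmod (x i))\<^sup>2) summable_on UNIV"
      by (rule summable_finite_support, rule finite_subset[OF _ fin]) auto
    have le: "(cmod (H_app ev x i))\<^sup>2 \<le> M\<^sup>2 * (cmod (x i))\<^sup>2" for i
    proof (cases "x i = 0")
      case False
      then have "ev i \<le> M" using x by (auto simp: V_def)
      then have "(ev i)\<^sup>2 \<le> M\<^sup>2" using ev0[of i] by (simp add: power_mono)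
      then show ?thesis
        by (simp add: H_app_def norm_mult power_mult_distrib mult_right_mono)
    qed (simp add: H_app_def)
    have "(\<Sum>\<^sub>\<infinity>i. (cmod (H_app ev x i))\<^sup>2) \<le> (\<Sum>\<^sub>\<infinity>i. M\<^sup>2 * (cmod (x i))\<^sup>2)"
      by (rule infsum_mono[OF s1 s2 le])
    also have "\<dots> = M\<^sup>2 * (\<Sum>\<^sub>\<infinity>i. (cmod (x i))\<^sup>2)" by (rule infsum_cmult_right') 
    finally have "sqrt (\<Sum>\<^sub>\<infinity>i. (cmod (H_app ev x i))\<^sup>2) \<le> sqrt (M\<^sup>2 * (\<Sum>\<^sub>\<infinity>i. (cmod (x i))\<^sup>2))"
      by (rule real_sqrt_le_mono)
    then show ?thesis by (simp add: l2_norm_def real_sqrt_mult)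
  qed
  have "finite_dimensional V" using nb sub dom bd unfolding no_inf_dim_bounded_subspace_def by blast
  moreover have "delta t \<in> V" if "t \<in> {i. ev i \<le> M}" for t
  proof -
    have "{i. delta t i \<noteq> 0} = {t}" by (auto simp: delta_def)
    then show ?thesis using that by (auto simp: V_def delta_def)
  qed
  ultimately show ?thesis by (rule findim_deltas_finite)
qed


lemma re_calc: "Re (cnj (complex_of_real s) * complex_of_real P * complex_of_real s + cnj (complex_of_real s) * c * (- cnj c) + cnj (- cnj c) * cnj c * complex_of_real s + cnj (- cnj c) * complex_of_real Q * (- cnj c)) = s\<^sup>2 * P - 2 * s * (cmod c)\<^sup>2 + Q * (cmod c)\<^sup>2"
proof -
  have cc: "c * cnj c = of_real ((cmod c)\<^sup>2)" using complex_norm_square[of c] by simp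
  have "cnj (complex_of_real s) * complex_of_real P * complex_of_real s + cnj (complex_of_real s) * c * (- cnj c) + cnj (- cnj c) * cnj c * complex_of_real s + cnj (- cnj c) * complex_of_real Q * (- cnj c)
      = of_real (s\<^sup>2 * P) - 2 * of_real s * (c * cnj c) + of_real Q * (c * cnj c)"
    by (simp add: power2_eq_square algebra_simps)
  also have "\<dots> = of_real (s\<^sup>2 * P - 2 * s * (cmod c)\<^sup>2 + Q * (cmod c)\<^sup>2)" unfolding cc by simp
  finally show ?thesis by (metis Re_complex_of_real)
qed

lemma dens_herm: "density_operator \<rho> \<Longrightarrow> \<rho> j i = cnj (\<rho> i j)"
  unfolding density_operator_def by blast

lemma dens_diag_real:
  assumes d: "density_operator \<rho>" shows "\<rho> i i = of_real (Re (\<rho> i i))"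
proof -
  have h: "\<rho> i i = cnj (\<rho> i i)" by (rule dens_herm[OF d])
  have "Im (\<rho> i i) = Im (cnj (\<rho> i i))" using h by (rule arg_cong)
  moreover have "Im (cnj (\<rho> i i)) = - Im (\<rho> i i)" by simp
  ultimately have "Im (\<rho> i i) = 0" by linarith
  then show ?thesis by (simp add: complex_eq_iff)
qed

lemma dens_qf:
  assumes "density_operator \<rho>" "finite A" "\<And>k. k \<notin> A \<Longrightarrow> x k = 0"
  shows "0 \<le> Re (\<Sum>k\<in>A. \<Sum>l\<in>A. cnj (x k) * \<rho> k l * x l)"
proof -
  let ?S = "{i. x i \<noteq> 0}"
  have sub: "?S \<subseteq> A" using assms(3) by auto
  have fin: "finite ?S" using sub assms(2) finite_subset by blast
  have eq: "(\<Sum>k\<in>?S. \<Sum>l\<in>?S. cnj (x k) * \<rho> k l * x l) = (\<Sum>k\<in>A. \<Sum>l\<in>?S. cnj (x k) * \<rho> k l * x l)"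
    by (rule sum.mono_neutral_left[OF assms(2) sub]) auto
  also have "\<dots> = (\<Sum>k\<in>A. \<Sum>l\<in>A. cnj (x k) * \<rho> k l * x l)"
    by (rule sum.cong[OF refl], rule sum.mono_neutral_left[OF assms(2) sub]) auto
  finally have eq2: "(\<Sum>k\<in>?S. \<Sum>l\<in>?S. cnj (x k) * \<rho> k l * x l) = (\<Sum>k\<in>A. \<Sum>l\<in>A. cnj (x k) * \<rho> k l * x l)" .
  have all: "\<forall>x::'a \<Rightarrow> complex. finite {i. x i \<noteq> 0} \<longrightarrow>
        0 \<le> Re (\<Sum>i\<in>{i. x i \<noteq> 0}. \<Sum>j\<in>{i. x i \<noteq> 0}. cnj (x i) * \<rho> i j * x j)"
    using assms(1) unfolding density_operator_def by (rule conjunct1[OF conjunct2])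
  have "0 \<le> Re (\<Sum>k\<in>?S. \<Sum>l\<in>?S. cnj (x k) * \<rho> k l * x l)"
    using all[rule_format, OF fin] .
  then show ?thesis unfolding eq2 .
qed

lemma dens_diag_nonneg:
  assumes "density_operator \<rho>" shows "0 \<le> Re (\<rho> i i)"
  using dens_qf[OF assms, of "{i}" "\<lambda>k. if k = i then 1 else 0"] by simp

lemma dens_cs:
  assumes d: "density_operator \<rho>"
  shows "(cmod (\<rho> i j))\<^sup>2 \<le> Re (\<rho> i i) * Re (\<rho> j j)"
proof (cases "i = j")
  case True
  have e: "\<rho> j j = of_real (Re (\<rho> j j))" by (rule dens_diag_real[OF d])
  have "cmod (\<rho> j j) = \<bar>Re (\<rho> j j)\<bar>" by (subst e) simp
  then show ?thesis using True by (simp add: power2_eq_square)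
next
  case ij: False
  define P where "P = Re (\<rho> i i)"
  define Q where "Q = Re (\<rho> j j)"
  define c where "c = \<rho> i j"
  have P0: "0 \<le> P" "0 \<le> Q" using dens_diag_nonneg[OF d] by (auto simp: P_def Q_def)
  have rii: "\<rho> i i = of_real P" unfolding P_def by (rule dens_diag_real[OF d])
  have rjj: "\<rho> j j = of_real Q" unfolding Q_def by (rule dens_diag_real[OF d])
  have rji: "\<rho> j i = cnj c" unfolding c_def by (rule dens_herm[OF d])
  have g: "0 \<le> s\<^sup>2 * P - 2 * s * (cmod c)\<^sup>2 + Q * (cmod c)\<^sup>2" for s :: real
  proof -
    define x where "x = (\<lambda>k. if k = i then complex_of_real s else if k = j then - cnj c else 0)"
    have "0 \<le> Re (\<Sum>k\<in>{i,j}. \<Sum>l\<in>{i,j}. cnj (x k) * \<rho> k l * x l)"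
      by (rule dens_qf[OF d]) (auto simp: x_def)
    also have "(\<Sum>k\<in>{i,j}. \<Sum>l\<in>{i,j}. cnj (x k) * \<rho> k l * x l) =
        cnj (x i) * \<rho> i i * x i + cnj (x i) * \<rho> i j * x j + cnj (x j) * \<rho> j i * x i + cnj (x j) * \<rho> j j * x j"
      using ij by simp
    also have "Re \<dots> = s\<^sup>2 * P - 2 * s * (cmod c)\<^sup>2 + Q * (cmod c)\<^sup>2"
    proof -
      have xi: "x i = complex_of_real s" and xj: "x j = - cnj c" using ij by (auto simp: x_def)
      show ?thesis unfolding xi xj rii rjj rji c_def[symmetric] by (rule re_calc)
    qed
    finally show ?thesis .
  qed
  show ?thesis
  proof (cases "P = 0")
    case True
    have "0 \<le> - (cmod c)\<^sup>2 * (Q + 2)" using g[of "Q + 1"] True by (simp add: algebra_simps)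
    then have "(cmod c)\<^sup>2 * (Q + 2) \<le> 0" by linarith
    then have "(cmod c)\<^sup>2 \<le> 0" using P0 by (auto simp add: mult_le_0_iff)
    then have "c = 0" by simp
    then show ?thesis using P0 unfolding c_def[symmetric] P_def[symmetric] Q_def[symmetric] by simp
  next
    case False
    then have Pp: "P > 0" using P0 by simp
    define a where "a = (cmod c)\<^sup>2"
    have "0 \<le> (a / P)\<^sup>2 * P - 2 * (a / P) * a + Q * a" using g[of "a / P"] by (simp add: a_def)
    also have "\<dots> = (P * Q * a - a * a) / P" using Pp by (simp add: field_simps power2_eq_square)
    finally have "a * a \<le> P * Q * a" using Pp by (simp add: divide_nonneg_pos zero_le_divide_iff)
    moreover have "a \<ge> 0" by (simp add: a_def)
    ultimately have "a \<le> P * Q"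
    proof (cases "a = 0")
      case True then show ?thesis using P0 by simp
    next
      case False then have "a > 0" using \<open>a \<ge> 0\<close> by simp
      then show ?thesis using \<open>a * a \<le> P * Q * a\<close> by (simp add: mult_right_le_imp_le)
    qed
    then show ?thesis by (simp only: a_def c_def P_def Q_def)
  qed
qed


lemma finsum_le_infsum:
  fixes f :: "'a \<Rightarrow> real"
  assumes "f summable_on UNIV" "\<And>x. 0 \<le> f x" "finite A"
  shows "sum f A \<le> infsum f UNIV"
proof -
  have "infsum f A \<le> infsum f UNIV"
    by (rule infsum_mono_neutral) (use assms in auto)
  then show ?thesis using assms(3) by simp
qed

lemma dens_sum_le1:
  assumes d: "density_operator \<rho>" and A: "finite A"
  shows "(\<Sum>i\<in>A. Re (\<rho> i i)) \<le> 1"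
proof -
  have hs: "((\<lambda>i. Re (\<rho> i i)) has_sum 1) UNIV" using d unfolding density_operator_def by blast
  have "(\<Sum>i\<in>A. Re (\<rho> i i)) \<le> infsum (\<lambda>i. Re (\<rho> i i)) UNIV"
    using finsum_le_infsum[of "\<lambda>i. Re (\<rho> i i)", OF _ dens_diag_nonneg[OF d] A] hs
    unfolding summable_on_def by blast
  also have "\<dots> = 1" using hs by (rule infsumI)
  finally show ?thesis .
qed

lemma PE_dens: "\<rho> \<in> P_E ev E \<Longrightarrow> density_operator \<rho>"
  by (simp add: P_E_def)

lemma energy_part:
  assumes r: "\<rho> \<in> P_E ev E" and ev0: "\<And>i. 0 \<le> ev i" and A: "finite A"
  shows "(\<Sum>i\<in>A. Re (\<rho> i i) * ev i) \<le> E"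
proof -
  have d: "density_operator \<rho>" using r by (simp add: P_E_def)
  have "(\<Sum>i\<in>A. Re (\<rho> i i) * ev i) \<le> infsum (\<lambda>i. Re (\<rho> i i) * ev i) UNIV"
  proof (rule finsum_le_infsum[OF _ _ A])
    show "(\<lambda>i. Re (\<rho> i i) * ev i) summable_on UNIV" using r by (simp add: P_E_def energy_finite_def)
    show "0 \<le> Re (\<rho> i i) * ev i" for i using dens_diag_nonneg[OF d, of i] ev0[of i] by simp
  qed
  also have "\<dots> \<le> E" using r by (simp add: P_E_def energy_def)
  finally show ?thesis .
qed

lemma tail_single:
  assumes r: "\<rho> \<in> P_E ev E" and ev0: "\<And>i. 0 \<le> ev i" and A: "finite A"
    and M: "M > 0" and hi: "\<And>i. i \<in> A \<Longrightarrow> M < ev i"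
  shows "(\<Sum>i\<in>A. Re (\<rho> i i)) \<le> E / M"
proof -
  have d: "density_operator \<rho>" using r by (simp add: P_E_def)
  have "(\<Sum>i\<in>A. Re (\<rho> i i)) \<le> (\<Sum>i\<in>A. Re (\<rho> i i) * ev i / M)"
  proof (rule sum_mono)
    fix i assume "i \<in> A"
    then have "1 \<le> ev i / M" using hi[OF \<open>i \<in> A\<close>] M by simp
    then show "Re (\<rho> i i) \<le> Re (\<rho> i i) * ev i / M"
      using dens_diag_nonneg[OF d, of i] mult_left_mono[of 1 "ev i / M" "Re (\<rho> i i)"] by simp
  qed
  also have "\<dots> = (\<Sum>i\<in>A. Re (\<rho> i i) * ev i) / M" by (simp add: sum_divide_distrib)
  also have "\<dots> \<le> E / M" using energy_part[OF r ev0 A] M by (simp add: divide_right_mono)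
  finally show ?thesis .
qed

lemma tail_pairs:
  assumes r: "\<rho> \<in> P_E ev E" and ev0: "\<And>i. 0 \<le> ev i" and M: "M > 0"
    and G: "finite G" and GF: "G \<inter> ({i. ev i \<le> M} \<times> {i. ev i \<le> M}) = {}"
  shows "(\<Sum>(i,j)\<in>G. Re (\<rho> i i) * Re (\<rho> j j)) \<le> 2 * (E / M)"
proof -
  define p where "p i = Re (\<rho> i i)" for i
  have d: "density_operator \<rho>" using r by (simp add: P_E_def)
  have p0: "0 \<le> p i" for i using dens_diag_nonneg[OF d] by (simp add: p_def)
  define F where "F = {i. ev i \<le> M}"
  define G1 where "G1 = fst ` G \<union> snd ` G"
  have G1: "finite G1" using G by (simp add: G1_def)
  have sub: "G \<subseteq> ((G1 - F) \<times> G1) \<union> (G1 \<times> (G1 - F))"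
  proof
    fix z assume z: "z \<in> G"
    obtain a b where ab: "z = (a, b)" by fastforce
    have "a \<in> G1" "b \<in> G1" using z ab unfolding G1_def by force+
    moreover have "a \<notin> F \<or> b \<notin> F" using z ab GF unfolding F_def by auto
    ultimately show "z \<in> ((G1 - F) \<times> G1) \<union> (G1 \<times> (G1 - F))" using ab by auto
  qed
  let ?f = "\<lambda>(i,j). p i * p j"
  have f0: "0 \<le> ?f z" for z using p0 by (auto split: prod.splits)
  have fin1: "finite ((G1 - F) \<times> G1)" "finite (G1 \<times> (G1 - F))" using G1 by auto
  have "(\<Sum>z\<in>G. ?f z) \<le> (\<Sum>z\<in>((G1 - F) \<times> G1) \<union> (G1 \<times> (G1 - F)). ?f z)"
    by (rule sum_mono2) (use fin1 sub f0 in auto)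
  also have "\<dots> \<le> (\<Sum>z\<in>(G1 - F) \<times> G1. ?f z) + (\<Sum>z\<in>G1 \<times> (G1 - F). ?f z)"
  proof -
    have "(\<Sum>z\<in>((G1 - F) \<times> G1) \<union> (G1 \<times> (G1 - F)). ?f z) + (\<Sum>z\<in>((G1 - F) \<times> G1) \<inter> (G1 \<times> (G1 - F)). ?f z)
        = (\<Sum>z\<in>(G1 - F) \<times> G1. ?f z) + (\<Sum>z\<in>G1 \<times> (G1 - F). ?f z)"
      by (rule sum.union_inter[OF fin1])
    moreover have "0 \<le> (\<Sum>z\<in>((G1 - F) \<times> G1) \<inter> (G1 \<times> (G1 - F)). ?f z)" by (rule sum_nonneg) (use f0 in auto)
    ultimately show ?thesis by linarith
  qed
  also have "(\<Sum>z\<in>(G1 - F) \<times> G1. ?f z) = (\<Sum>i\<in>G1 - F. p i) * (\<Sum>j\<in>G1. p j)"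
    by (simp add: sum_product sum.cartesian_product)
  also have "(\<Sum>z\<in>G1 \<times> (G1 - F). ?f z) = (\<Sum>i\<in>G1. p i) * (\<Sum>j\<in>G1 - F. p j)"
    by (simp add: sum_product sum.cartesian_product)
  finally have ch: "(\<Sum>z\<in>G. ?f z) \<le> (\<Sum>i\<in>G1 - F. p i) * (\<Sum>j\<in>G1. p j) + (\<Sum>i\<in>G1. p i) * (\<Sum>j\<in>G1 - F. p j)" .
  have "(\<Sum>i\<in>G1 - F. p i) \<le> E / M"
    unfolding p_def by (rule tail_single[OF r ev0]) (use G1 M in \<open>auto simp: F_def\<close>)
  moreover have "(\<Sum>i\<in>G1. p i) \<le> 1" unfolding p_def by (rule dens_sum_le1[OF d G1])
  moreover have "0 \<le> (\<Sum>i\<in>G1 - F. p i)" "0 \<le> (\<Sum>i\<in>G1. p i)" by (auto intro: sum_nonneg p0)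
  ultimately have "(\<Sum>i\<in>G1 - F. p i) * (\<Sum>j\<in>G1. p j) + (\<Sum>i\<in>G1. p i) * (\<Sum>j\<in>G1 - F. p j) \<le> E/M * 1 + 1 * (E/M)"
    by (intro add_mono mult_mono) auto
  then show ?thesis using ch by (simp add: p_def)
qed


lemma subseq_pointwise:
  fixes g :: "nat \<Rightarrow> 'a::countable \<Rightarrow> complex"
  assumes "\<And>n x. cmod (g n x) \<le> 1"
  shows "\<exists>r l. strict_mono r \<and> (\<forall>x. (\<lambda>n. g (r n) x) \<longlonglongrightarrow> l x)"
proof -
  let ?K = "PiE UNIV (\<lambda>_::'a. cball (0::complex) 1)"
  have "compactin (product_topology (\<lambda>_. euclidean) UNIV) ?K"
    by (subst compactin_PiE) auto
  hence "compact ?K" by (simp add: euclidean_product_topology compactin_euclidean_iff)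
  hence "seq_compact ?K" by (rule compact_imp_seq_compact)
  moreover have "\<forall>n. g n \<in> ?K" using assms by (auto simp: PiE_def)
  ultimately obtain l r where "l \<in> ?K" "strict_mono r" "(g \<circ> r) \<longlonglongrightarrow> l"
    unfolding seq_compact_def by metis
  moreover have "(\<lambda>n. g (r n) x) \<longlonglongrightarrow> l x" for x
  proof -
    have "isCont (\<lambda>f::'a\<Rightarrow>complex. f x) l"
      using continuous_on_product_coordinates by (metis continuous_on_eq_continuous_at open_UNIV UNIV_I)
    from isCont_tendsto_compose[OF this \<open>(g \<circ> r) \<longlonglongrightarrow> l\<close>] show ?thesis by (simp add: o_def)
  qed
  ultimately show ?thesis by blast
qed

lemma cmod_diff_sq: "(cmod (a - b))\<^sup>2 \<le> 2 * (cmod a)\<^sup>2 + 2 * (cmod b)\<^sup>2"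
proof -
  have "cmod (a - b) \<le> cmod a + cmod b" by (rule norm_triangle_ineq4)
  then have "(cmod (a - b))\<^sup>2 \<le> (cmod a + cmod b)\<^sup>2" by (rule power_mono) simp
  also have "\<dots> \<le> 2 * (cmod a)\<^sup>2 + 2 * (cmod b)\<^sup>2"
    using zero_le_power2[of "cmod a - cmod b"] by (simp add: power2_eq_square algebra_simps)
  finally show ?thesis .
qed

lemma entry_bound:
  assumes r: "\<rho> \<in> P_E ev E" shows "cmod (\<rho> i j) \<le> 1"
proof -
  have d: "density_operator \<rho>" using r by (rule PE_dens)
  have pi: "Re (\<rho> i i) \<le> 1" using dens_sum_le1[OF d, of "{i}"] by simp
  have pj: "Re (\<rho> j j) \<le> 1" using dens_sum_le1[OF d, of "{j}"] by simp
  have "(cmod (\<rho> i j))\<^sup>2 \<le> Re (\<rho> i i) * Re (\<rho> j j)" by (rule dens_cs[OF d])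
  also have "\<dots> \<le> 1 * 1"
    by (rule mult_mono[OF pi pj]) (use dens_diag_nonneg[OF d] in auto)
  finally have "(cmod (\<rho> i j))\<^sup>2 \<le> 1\<^sup>2" by simp
  then show ?thesis by (rule power2_le_imp_le) simp
qed

lemma hs_bound:
  assumes r: "\<rho> \<in> P_E ev E" and s: "\<sigma> \<in> P_E ev E" and ev0: "\<And>i. 0 \<le> ev i" and M: "M > 0"
    and F: "finite {i. ev i \<le> M}"
  shows "(\<Sum>\<^sub>\<infinity>(i,j). (cmod (\<rho> i j - \<sigma> i j))\<^sup>2) \<le>
     (\<Sum>z\<in>{i. ev i \<le> M} \<times> {i. ev i \<le> M}. (cmod (\<rho> (fst z) (snd z) - \<sigma> (fst z) (snd z)))\<^sup>2) + 8 * (E / M)"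
    (is "infsum ?f UNIV \<le> ?B")
proof -
  define K where "K = {i. ev i \<le> M} \<times> {i. ev i \<le> M}"
  have K: "finite K" using F by (simp add: K_def)
  have dr: "density_operator \<rho>" and ds: "density_operator \<sigma>" using r s by (auto intro: PE_dens)
  have f_eq: "?f z = (cmod (\<rho> (fst z) (snd z) - \<sigma> (fst z) (snd z)))\<^sup>2" for z
    by (simp add: case_prod_beta)
  have f0: "0 \<le> ?f z" for z by (simp add: case_prod_beta)
  have le: "sum ?f G \<le> ?B" if G: "finite G" for G
  proof -
    have "sum ?f G = sum ?f (G \<inter> K) + sum ?f (G - K)" by (rule sum.Int_Diff[OF G])
    also have "sum ?f (G \<inter> K) \<le> sum ?f K"
      by (rule sum_mono2[OF K]) (use f0 in auto)
    also have "sum ?f K = (\<Sum>z\<in>K. (cmod (\<rho> (fst z) (snd z) - \<sigma> (fst z) (snd z)))\<^sup>2)"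
      by (rule sum.cong[OF refl]) (simp add: f_eq)
    also have "sum ?f (G - K) \<le> (\<Sum>(i,j)\<in>G - K. 2 * (Re (\<rho> i i) * Re (\<rho> j j)) + 2 * (Re (\<sigma> i i) * Re (\<sigma> j j)))"
    proof (rule sum_mono)
      fix z assume "z \<in> G - K"
      obtain i j where z: "z = (i, j)" by fastforce
      have "(cmod (\<rho> i j - \<sigma> i j))\<^sup>2 \<le> 2 * (cmod (\<rho> i j))\<^sup>2 + 2 * (cmod (\<sigma> i j))\<^sup>2" by (rule cmod_diff_sq)
      also have "\<dots> \<le> 2 * (Re (\<rho> i i) * Re (\<rho> j j)) + 2 * (Re (\<sigma> i i) * Re (\<sigma> j j))"
        using dens_cs[OF dr, of i j] dens_cs[OF ds, of i j] by linarith
      finally show "?f z \<le> (case z of (i,j) \<Rightarrow> 2 * (Re (\<rho> i i) * Re (\<rho> j j)) + 2 * (Re (\<sigma> i i) * Re (\<sigma> j j)))"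
        using z by simp
    qed
    also have "\<dots> = 2 * (\<Sum>(i,j)\<in>G - K. Re (\<rho> i i) * Re (\<rho> j j)) + 2 * (\<Sum>(i,j)\<in>G - K. Re (\<sigma> i i) * Re (\<sigma> j j))"
      by (simp add: sum.distrib sum_distrib_left case_prod_beta)
    also have "\<dots> \<le> 2 * (2 * (E / M)) + 2 * (2 * (E / M))"
    proof -
      have GK: "finite (G - K)" "(G - K) \<inter> ({i. ev i \<le> M} \<times> {i. ev i \<le> M}) = {}"
        using G by (auto simp: K_def)
      show ?thesis using tail_pairs[OF r ev0 M GK] tail_pairs[OF s ev0 M GK] by linarith
    qed
    finally show ?thesis by (simp add: K_def)
  qed
  have "?f summable_on UNIV"
    by (rule nonneg_bdd_above_summable_on) (use f0 le in \<open>auto intro!: bdd_aboveI2\<close>)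
  then show ?thesis by (rule infsum_le_finite_sums) (use le in auto)
qed



theorem mainTheorem9:
  fixes ev :: "'i::countable \<Rightarrow> real" and E :: real
    and \<rho> :: "nat \<Rightarrow> 'i \<Rightarrow> 'i \<Rightarrow> complex"
  assumes "\<And>i. 0 \<le> ev i"
    and "no_inf_dim_bounded_subspace ev"
    and "E > 0"
    and "\<And>n. \<rho> n \<in> P_E ev E"
  shows "\<exists>r::nat \<Rightarrow> nat. strict_mono r \<and>
           (\<forall>\<epsilon>>0. \<exists>N. \<forall>m\<ge>N. \<forall>n\<ge>N. hs_norm (\<lambda>i j. \<rho> (r m) i j - \<rho> (r n) i j) < \<epsilon>)"
proof -
  note ev0 = assms(1) and nb = assms(2) and E0 = assms(3) and PE = assms(4)
  define g where "g n z = \<rho> n (fst z) (snd z)" for n z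
  have gb: "cmod (g n z) \<le> 1" for n z unfolding g_def by (rule entry_bound[OF PE])
  obtain r L where r: "strict_mono r" and conv: "\<And>z. (\<lambda>n. g (r n) z) \<longlonglongrightarrow> L z"
    using subseq_pointwise[of g, OF gb] by blast
  have "\<exists>N. \<forall>m\<ge>N. \<forall>n\<ge>N. hs_norm (\<lambda>i j. \<rho> (r m) i j - \<rho> (r n) i j) < \<epsilon>" if eps: "\<epsilon> > 0" for \<epsilon>
  proof -
    define \<delta> where "\<delta> = \<epsilon>\<^sup>2"
    have d0: "\<delta> > 0" using eps by (simp add: \<delta>_def)
    define M where "M = 32 * E / \<delta>"
    have M0: "M > 0" using E0 d0 by (simp add: M_def)
    have EM: "8 * (E / M) = \<delta> / 4" using E0 d0 by (simp add: M_def field_simps)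
    have F: "finite {i. ev i \<le> M}" by (rule finite_low_energy[OF ev0 nb])
    define K where "K = {i. ev i \<le> M} \<times> {i. ev i \<le> M}"
    have K: "finite K" using F by (simp add: K_def)
    define h where "h n = (\<Sum>z\<in>K. (cmod (g (r n) z - L z))\<^sup>2)" for n
    have "h \<longlonglongrightarrow> (\<Sum>z\<in>K. (cmod (L z - L z))\<^sup>2)"
      unfolding h_def by (intro tendsto_sum tendsto_power tendsto_norm tendsto_diff conv tendsto_const)
    then have "h \<longlonglongrightarrow> 0" by simp
    then have "eventually (\<lambda>n. h n < \<delta> / 16) sequentially"
      by (rule order_tendstoD(2)) (use d0 in simp)
    then obtain N where N: "\<And>n. n \<ge> N \<Longrightarrow> h n < \<delta> / 16" by (auto simp: eventually_sequentially)
    have "hs_norm (\<lambda>i j. \<rho> (r m) i j - \<rho> (r n) i j) < \<epsilon>" if mn: "m \<ge> N" "n \<ge> N" for m n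
    proof -
      have SF: "(\<Sum>z\<in>K. (cmod (\<rho> (r m) (fst z) (snd z) - \<rho> (r n) (fst z) (snd z)))\<^sup>2) \<le> 2 * h m + 2 * h n"
      proof -
        have "(\<Sum>z\<in>K. (cmod (\<rho> (r m) (fst z) (snd z) - \<rho> (r n) (fst z) (snd z)))\<^sup>2)
            \<le> (\<Sum>z\<in>K. 2 * (cmod (g (r m) z - L z))\<^sup>2 + 2 * (cmod (g (r n) z - L z))\<^sup>2)"
        proof (rule sum_mono)
          fix z
          have "\<rho> (r m) (fst z) (snd z) - \<rho> (r n) (fst z) (snd z) = (g (r m) z - L z) - (g (r n) z - L z)"
            by (simp add: g_def)
          then show "(cmod (\<rho> (r m) (fst z) (snd z) - \<rho> (r n) (fst z) (snd z)))\<^sup>2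
              \<le> 2 * (cmod (g (r m) z - L z))\<^sup>2 + 2 * (cmod (g (r n) z - L z))\<^sup>2"
            using cmod_diff_sq by metis
        qed
        also have "\<dots> = 2 * h m + 2 * h n" by (simp add: h_def sum.distrib sum_distrib_left)
        finally show ?thesis .
      qed
      have "(\<Sum>\<^sub>\<infinity>(i,j). (cmod (\<rho> (r m) i j - \<rho> (r n) i j))\<^sup>2) \<le>
          (\<Sum>z\<in>K. (cmod (\<rho> (r m) (fst z) (snd z) - \<rho> (r n) (fst z) (snd z)))\<^sup>2) + 8 * (E / M)"
        unfolding K_def by (rule hs_bound[OF PE PE ev0 M0 F])
      also have "\<dots> < \<delta>" using SF N[OF mn(1)] N[OF mn(2)] EM d0 by linarith
      finally have "sqrt (\<Sum>\<^sub>\<infinity>(i,j). (cmod (\<rho> (r m) i j - \<rho> (r n) i j))\<^sup>2) < sqrt \<delta>"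
        by (rule real_sqrt_less_mono)
      also have "sqrt \<delta> = \<epsilon>" using eps by (simp add: \<delta>_def)
      finally show ?thesis by (simp add: hs_norm_def)
    qed
    then show ?thesis by blast
  qed
  then show ?thesis using r by blast
qed


end
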